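(* Let $V\colon \mathbf{ZZ}\to\mathbf{Vec}$ be a nonzero zigzag persistence module. Then $V$ is indecomposable if and only if $V$ is $[-k,k]$-indecomposable for every integer $k\geq 0$.
   Context: Fix a field $\mathbb{F}$; $\mathbf{Vec}$ denotes the category of finite-dimensional $\mathbb{F}$-vector spaces. $\mathbf{ZZ}$ is the category whose objects are the integers, with non-identity morphisms $i\to i-1$ and $i\to i+1$ for every even integer $i$ (even integers are sources, odd integers are sinks). A zigzag persistence module is a functor $V\colon\mathbf{ZZ}\to\mathbf{Vec}$, i.e. finite-dimensional spaces $V_i$ ($i\in\mathbb{Z}$) together with linear maps $g_i=V(i\to i-1)\colon V_i\to V_{i-1}$ and $f_i=V(i\to i+1)\colon V_i\to V_{i+1}$ for each even $i$. Morphisms are natural transformations. The direct sum $U\oplus W$ is defined pointwise: $(U\oplus W)_i=U_i\oplus W_i$, $(U\oplus W)(\alpha)=U(\alpha)\oplus W(\alpha)$. $V$ is decomposable if $V\cong U\oplus W$ with $U,W$ both nonzero, and indecomposable otherwise. For integers $s\leq t$, a nonzero $W$ is $[s,t]$-indecomposable if for every decomposition $W=W^1\oplus W^2$ (into submodules), either $W^1_i=0$ for all $s\le i\le t$, or $W^2_i=0$ for all $s\le i\le t$. *)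

theory Defs
  imports "Jordan_Normal_Form.Matrix"
begin

text \<open>A zigzag persistence module over a field 'a, in coordinates:
  V_i = 'a^(zdim V i) (column vectors), and for even i the structure maps
  g_i = zg V i : V_i -> V_(i-1) and f_i = zf V i : V_i -> V_(i+1) are matrices.
  The values of zg, zf at odd i are irrelevant (never used).\<close>

record 'a zz =
  zdim :: "int \<Rightarrow> nat"
  zg :: "int \<Rightarrow> 'a mat"
  zf :: "int \<Rightarrow> 'a mat"

definition zz_module :: "('a::field) zz \<Rightarrow> bool" where
  "zz_module V \<longleftrightarrow> (\<forall>i. even i \<longrightarrow>
      zg V i \<in> carrier_mat (zdim V (i - 1)) (zdim V i) \<and>
      zf V i \<in> carrier_mat (zdim V (i + 1)) (zdim V i))"

definition zz_zero :: "('a::field) zz \<Rightarrow> bool" where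
  "zz_zero V \<longleftrightarrow> (\<forall>i. zdim V i = 0)"

definition zz_hom :: "('a::field) zz \<Rightarrow> 'a zz \<Rightarrow> (int \<Rightarrow> 'a mat) \<Rightarrow> bool" where
  "zz_hom V W \<phi> \<longleftrightarrow> (\<forall>i. \<phi> i \<in> carrier_mat (zdim W i) (zdim V i)) \<and>
     (\<forall>i. even i \<longrightarrow> \<phi> (i - 1) * zg V i = zg W i * \<phi> i \<and>
                     \<phi> (i + 1) * zf V i = zf W i * \<phi> i)"

definition zz_iso :: "('a::field) zz \<Rightarrow> 'a zz \<Rightarrow> bool" where
  "zz_iso V W \<longleftrightarrow> (\<exists>\<phi> \<psi>. zz_hom V W \<phi> \<and> zz_hom W V \<psi> \<and>
     (\<forall>i. \<psi> i * \<phi> i = 1\<^sub>m (zdim V i) \<and> \<phi> i * \<psi> i = 1\<^sub>m (zdim W i)))"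

definition zz_sum :: "('a::field) zz \<Rightarrow> 'a zz \<Rightarrow> 'a zz" where
  "zz_sum U W = \<lparr> zdim = (\<lambda>i. zdim U i + zdim W i),
     zg = (\<lambda>i. four_block_mat (zg U i) (0\<^sub>m (zdim U (i - 1)) (zdim W i))
                              (0\<^sub>m (zdim W (i - 1)) (zdim U i)) (zg W i)),
     zf = (\<lambda>i. four_block_mat (zf U i) (0\<^sub>m (zdim U (i + 1)) (zdim W i))
                              (0\<^sub>m (zdim W (i + 1)) (zdim U i)) (zf W i)) \<rparr>"

definition zz_decomposable :: "('a::field) zz \<Rightarrow> bool" where
  "zz_decomposable V \<longleftrightarrow> (\<exists>U W. zz_module U \<and> zz_module W \<and>
      \<not> zz_zero U \<and> \<not> zz_zero W \<and> zz_iso V (zz_sum U W))"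

definition zz_indecomposable :: "('a::field) zz \<Rightarrow> bool" where
  "zz_indecomposable V \<longleftrightarrow> \<not> zz_decomposable V"

definition is_subspace :: "nat \<Rightarrow> ('a::field) vec set \<Rightarrow> bool" where
  "is_subspace n S \<longleftrightarrow> S \<subseteq> carrier_vec n \<and> 0\<^sub>v n \<in> S \<and>
     (\<forall>u\<in>S. \<forall>w\<in>S. u + w \<in> S) \<and> (\<forall>c. \<forall>u\<in>S. c \<cdot>\<^sub>v u \<in> S)"

definition zz_submodule :: "('a::field) zz \<Rightarrow> (int \<Rightarrow> 'a vec set) \<Rightarrow> bool" where
  "zz_submodule V S \<longleftrightarrow> (\<forall>i. is_subspace (zdim V i) (S i)) \<and>
     (\<forall>i. even i \<longrightarrow> (\<forall>v\<in>S i. zg V i *\<^sub>v v \<in> S (i - 1) \<and> zf V i *\<^sub>v v \<in> S (i + 1)))"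

definition zz_internal_decomp :: "('a::field) zz \<Rightarrow> (int \<Rightarrow> 'a vec set) \<Rightarrow> (int \<Rightarrow> 'a vec set) \<Rightarrow> bool" where
  "zz_internal_decomp V S1 S2 \<longleftrightarrow> zz_submodule V S1 \<and> zz_submodule V S2 \<and>
     (\<forall>i. S1 i \<inter> S2 i = {0\<^sub>v (zdim V i)} \<and>
          (\<forall>x\<in>carrier_vec (zdim V i). \<exists>u\<in>S1 i. \<exists>w\<in>S2 i. x = u + w))"

definition zz_interval_indecomposable :: "('a::field) zz \<Rightarrow> int \<Rightarrow> int \<Rightarrow> bool" where
  "zz_interval_indecomposable V s t \<longleftrightarrow> \<not> zz_zero V \<and>
     (\<forall>S1 S2. zz_internal_decomp V S1 S2 \<longrightarrow>
        (\<forall>i\<in>{s..t}. S1 i = {0\<^sub>v (zdim V i)}) \<or> (\<forall>i\<in>{s..t}. S2 i = {0\<^sub>v (zdim V i)}))"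

end

theory Submission imports Defs "Jordan_Normal_Form.Determinant" begin
declare minus_carrier_mat[simp]

lemma minus_zero_mat_r[simp]: "A \<in> carrier_mat nr nc \<Longrightarrow> A - 0\<^sub>m nr nc = (A :: 'a :: ring mat)"
  by (intro eq_matI) auto

lemma four_block_degen:
  assumes "X \<in> carrier_mat n m" "W \<in> carrier_mat 0 0"
  shows "four_block_mat X Y Z W = X"
  using assms by (intro eq_matI) auto

lemma add_minus_cancel_mat:
  assumes "X \<in> carrier_mat n m" "Y \<in> carrier_mat n m" "F \<in> carrier_mat n m"
  shows "(X + Y) + (F - Y) = X + (F :: 'a :: ring mat)"
  using assms by (intro eq_matI) auto

lemma idem_col_row:
  fixes F :: "'a::field mat"
  assumes F: "F \<in> carrier_mat n n" and FF: "F * F = F" and F0: "F \<noteq> 0\<^sub>m n n"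
  shows "\<exists>b c. b \<in> carrier_mat n 1 \<and> c \<in> carrier_mat 1 n \<and> F * b = b \<and> c * F = c \<and> c * b = 1\<^sub>m 1"
proof -
  obtain r0 c0 where rc: "r0 < n" "c0 < n" and x: "F $$ (r0,c0) \<noteq> 0"
  proof -
    have "\<not> (\<forall>i<n. \<forall>j<n. F $$ (i,j) = 0)"
    proof
      assume "\<forall>i<n. \<forall>j<n. F $$ (i,j) = 0"
      then have "F = 0\<^sub>m n n" using F by (intro eq_matI) auto
      then show False using F0 by simp
    qed
    then show ?thesis using that by blast
  qed
  define x where "x = F $$ (r0,c0)"
  define b where "b = mat n 1 (\<lambda>(i,j). F $$ (i,c0))"
  define c where "c = mat 1 n (\<lambda>(i,j). F $$ (r0,j) / x)"
  have b: "b \<in> carrier_mat n 1" and c: "c \<in> carrier_mat 1 n" unfolding b_def c_def by auto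
  have colb: "col b 0 = col F c0" using F rc unfolding b_def by (intro eq_vecI) auto
  have rowc: "row c 0 = (1/x) \<cdot>\<^sub>v row F r0" using F rc unfolding c_def by (intro eq_vecI) auto
  have FFe: "\<And>i j. i < n \<Longrightarrow> j < n \<Longrightarrow> row F i \<bullet> col F j = F $$ (i,j)"
    using F FF by (metis carrier_matD index_mult_mat(1))
  have "F * b = b"
  proof (rule eq_matI)
    fix i j assume "i < dim_row b" "j < dim_col b"
    then have i: "i < n" and j: "j = 0" using b by auto
    show "(F * b) $$ (i, j) = b $$ (i, j)"
      using i j F b colb FFe[OF i rc(2)] by (simp add: b_def)
  qed (use F b in auto)
  moreover have "c * F = c"
  proof (rule eq_matI)
    fix i j assume "i < dim_row c" "j < dim_col c"
    then have i: "i = 0" and j: "j < n" using c by auto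
    have "row c 0 \<bullet> col F j = (1/x) * (row F r0 \<bullet> col F j)"
      unfolding rowc using F j rc by (intro smult_scalar_prod_distrib[of _ n]) auto
    then show "(c * F) $$ (i, j) = c $$ (i, j)"
      using i j F c FFe[OF rc(1) j] by (simp add: c_def)
  qed (use F c in auto)
  moreover have "c * b = 1\<^sub>m 1"
  proof (rule eq_matI)
    fix i j assume "i < dim_row (1\<^sub>m 1 :: 'a mat)" "j < dim_col (1\<^sub>m 1 :: 'a mat)"
    then have i: "i = 0" and j: "j = 0" by auto
    have "row c 0 \<bullet> col b 0 = (1/x) * (row F r0 \<bullet> col F c0)"
      unfolding rowc colb using F rc by (intro smult_scalar_prod_distrib[of _ n]) auto
    also have "\<dots> = 1" using FFe[OF rc] x by (simp add: x_def)
    finally show "(c * b) $$ (i, j) = 1\<^sub>m 1 $$ (i, j)"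
      using i j b c by simp
  qed (use b c in auto)
  ultimately show ?thesis using b c by blast
qed

lemma left_inv_bound:
  fixes B C :: "'a::field mat"
  assumes B: "B \<in> carrier_mat n k" and C: "C \<in> carrier_mat k n" and CB: "C * B = 1\<^sub>m k"
  shows "k \<le> n"
proof (rule ccontr)
  assume "\<not> k \<le> n"
  then have nk: "n < k" by simp
  define B' where "B' = mat k k (\<lambda>(i,j). if i < n then B $$ (i,j) else 0)"
  define C' where "C' = mat k k (\<lambda>(i,j). if j < n then C $$ (i,j) else 0)"
  have B': "B' \<in> carrier_mat k k" and C': "C' \<in> carrier_mat k k" unfolding B'_def C'_def by auto
  have "C' * B' = 1\<^sub>m k"
  proof (rule eq_matI)
    fix i j assume "i < dim_row (1\<^sub>m k :: 'a mat)" "j < dim_col (1\<^sub>m k :: 'a mat)"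
    then have i: "i < k" and j: "j < k" by auto
    have "row C' i \<bullet> col B' j = (\<Sum>l\<in>{0..<k}. (if l < n then C $$ (i,l) * B $$ (l,j) else 0))"
      unfolding scalar_prod_def using i j B C by (intro sum.cong) (auto simp: B'_def C'_def)
    also have "\<dots> = (\<Sum>l\<in>{0..<n}. C $$ (i,l) * B $$ (l,j))"
      using nk by (intro sum.mono_neutral_cong_right) auto
    also have "\<dots> = row C i \<bullet> col B j"
      unfolding scalar_prod_def using i j B C by (intro sum.cong) auto
    also have "\<dots> = (C * B) $$ (i,j)" using i j B C by simp
    finally show "(C' * B') $$ (i,j) = 1\<^sub>m k $$ (i,j)" using i j B' C' CB by simp
  qed (use B' C' in auto)
  then have "det C' * det B' = 1" using det_mult[OF C' B'] by simp
  moreover have "det C' = 0"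
  proof -
    have "C' *\<^sub>v unit_vec k (k - 1) = 0\<^sub>v k"
    proof (rule eq_vecI)
      fix i assume "i < dim_vec (0\<^sub>v k :: 'a vec)"
      then have i: "i < k" by simp
      have "row C' i \<bullet> unit_vec k (k-1) = row C' i $ (k - 1)"
        using i C' by (intro scalar_prod_right_unit) (use nk in auto)
      also have "\<dots> = 0" using i nk by (simp add: C'_def)
      finally show "(C' *\<^sub>v unit_vec k (k - 1)) $ i = 0\<^sub>v k $ i" using i C' by simp
    qed (use C' in auto)
    moreover have "unit_vec k (k - 1) \<noteq> (0\<^sub>v k :: 'a vec)"
      by (rule unit_vec_nonzero) (use nk in auto)
    ultimately show ?thesis using det_0_iff_vec_prod_zero_field[OF C'] unit_vec_carrier by blast
  qed
  ultimately show False by simp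
qed

lemma ext_step:
  fixes F B C b c :: "'a::field mat"
  assumes F: "F \<in> carrier_mat n n" and B: "B \<in> carrier_mat n k" and C: "C \<in> carrier_mat k n"
  and b: "b \<in> carrier_mat n 1" and c: "c \<in> carrier_mat 1 n"
  and CB: "C * B = 1\<^sub>m k" and FF: "F * F = F" and FB: "F * B = 0\<^sub>m n k" and CF: "C * F = 0\<^sub>m k n"
  and Fb: "F * b = b" and cF: "c * F = c" and cb: "c * b = 1\<^sub>m 1"
  shows "\<exists>B' C' F'. B' \<in> carrier_mat n (Suc k) \<and> C' \<in> carrier_mat (Suc k) n \<and> F' \<in> carrier_mat n n \<and>
     C' * B' = 1\<^sub>m (Suc k) \<and> F' * F' = F' \<and> F' * B' = 0\<^sub>m n (Suc k) \<and> C' * F' = 0\<^sub>m (Suc k) n \<and>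
     B' * C' + F' = B * C + F"
proof -
  define B' where "B' = four_block_mat B b (0\<^sub>m 0 k) (0\<^sub>m 0 1)"
  define C' where "C' = four_block_mat C (0\<^sub>m k 0) c (0\<^sub>m 1 0)"
  define F' where "F' = F - b * c"
  have bc: "b * c \<in> carrier_mat n n" using b c by auto
  have B': "B' \<in> carrier_mat n (Suc k)" unfolding B'_def using B by (metis Suc_eq_plus1 add_0_right four_block_carrier_mat zero_carrier_mat)
  have C': "C' \<in> carrier_mat (Suc k) n" unfolding C'_def using C c by (metis Suc_eq_plus1 add_0_right four_block_carrier_mat zero_carrier_mat)
  have F': "F' \<in> carrier_mat n n" unfolding F'_def using F bc by simp
  have Cb: "C * b = 0\<^sub>m k 1"
  proof -
    have "C * b = C * (F * b)" using Fb by simp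
    also have "\<dots> = (C * F) * b" using assoc_mult_mat[OF C F b] by simp
    finally show ?thesis using CF b by simp
  qed
  have cB: "c * B = 0\<^sub>m 1 k"
  proof -
    have "c * B = (c * F) * B" using cF by simp
    also have "\<dots> = c * (F * B)" using assoc_mult_mat[OF c F B] by simp
    finally show ?thesis using FB c by simp
  qed
  have "C' * B' = four_block_mat (C * B + 0\<^sub>m k 0 * 0\<^sub>m 0 k) (C * b + 0\<^sub>m k 0 * 0\<^sub>m 0 1)
      (c * B + 0\<^sub>m 1 0 * 0\<^sub>m 0 k) (c * b + 0\<^sub>m 1 0 * 0\<^sub>m 0 1)"
    unfolding B'_def C'_def by (rule mult_four_block_mat) (use B C b c in auto)
  also have "\<dots> = four_block_mat (1\<^sub>m k) (0\<^sub>m k 1) (0\<^sub>m 1 k) (1\<^sub>m 1)"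
    using CB Cb cB cb by simp
  also have "\<dots> = 1\<^sub>m (Suc k)" by simp
  finally have 1: "C' * B' = 1\<^sub>m (Suc k)" .
  have 2: "F' * F' = F'"
  proof -
    have "F' * F' = (F * F - F * (b*c)) - ((b*c) * F - (b*c)*(b*c))"
      unfolding F'_def
      by (simp add: minus_mult_distrib_mat[OF F bc, of _ n] mult_minus_distrib_mat[OF F F bc] mult_minus_distrib_mat[OF bc F bc] F bc)
    also have "F * (b*c) = b * c" using assoc_mult_mat[OF F b c, symmetric] Fb by simp
    also have "(b*c) * F = b * c" using assoc_mult_mat[OF b c F] cF by simp
    also have "(b*c)*(b*c) = b * c" 
    proof -
      have "(b*c)*(b*c) = b * (c * (b * c))" using assoc_mult_mat[OF b c bc] by simp
      also have "c * (b * c) = (c * b) * c" using assoc_mult_mat[OF c b c] by simp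
      finally show ?thesis using cb c by simp
    qed
    finally show ?thesis using F bc FF by (simp add: F'_def)
  qed
  have F'B: "F' * B = 0\<^sub>m n k"
  proof -
    have "F' * B = F * B - (b * c) * B" unfolding F'_def by (rule minus_mult_distrib_mat[OF F bc B])
    also have "(b * c) * B = b * (c * B)" using assoc_mult_mat[OF b c B] .
    finally show ?thesis using FB cB b by simp
  qed
  have F'b: "F' * b = 0\<^sub>m n 1"
  proof -
    have "F' * b = F * b - (b * c) * b" unfolding F'_def by (rule minus_mult_distrib_mat[OF F bc b])
    also have "(b * c) * b = b * (c * b)" using assoc_mult_mat[OF b c b] .
    finally show ?thesis using Fb cb b by simp
  qed
  have CF': "C * F' = 0\<^sub>m k n"
  proof -
    have "C * F' = C * F - C * (b * c)" unfolding F'_def by (rule mult_minus_distrib_mat[OF C F bc])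
    also have "C * (b * c) = (C * b) * c" using assoc_mult_mat[OF C b c] by simp
    finally show ?thesis using CF Cb c by simp
  qed
  have cF': "c * F' = 0\<^sub>m 1 n"
  proof -
    have "c * F' = c * F - c * (b * c)" unfolding F'_def by (rule mult_minus_distrib_mat[OF c F bc])
    also have "c * (b * c) = (c * b) * c" using assoc_mult_mat[OF c b c] by simp
    finally show ?thesis using cF cb c by simp
  qed
  have F'blk: "F' = four_block_mat F' (0\<^sub>m n 0) (0\<^sub>m 0 n) (0\<^sub>m 0 0)"
    using four_block_degen[OF F', of "0\<^sub>m 0 0"] by simp
  have "F' * B' = four_block_mat (F' * B + 0\<^sub>m n 0 * 0\<^sub>m 0 k) (F' * b + 0\<^sub>m n 0 * 0\<^sub>m 0 1)
      (0\<^sub>m 0 n * B + 0\<^sub>m 0 0 * 0\<^sub>m 0 k) (0\<^sub>m 0 n * b + 0\<^sub>m 0 0 * 0\<^sub>m 0 1)"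
    unfolding B'_def by (subst F'blk, rule mult_four_block_mat) (use B b F' in auto)
  also have "\<dots> = 0\<^sub>m n (Suc k)" using F'B F'b B b by simp
  finally have 3: "F' * B' = 0\<^sub>m n (Suc k)" .
  have "C' * F' = four_block_mat (C * F' + 0\<^sub>m k 0 * 0\<^sub>m 0 n) (C * 0\<^sub>m n 0 + 0\<^sub>m k 0 * 0\<^sub>m 0 0)
      (c * F' + 0\<^sub>m 1 0 * 0\<^sub>m 0 n) (c * 0\<^sub>m n 0 + 0\<^sub>m 1 0 * 0\<^sub>m 0 0)"
    unfolding C'_def by (subst F'blk, rule mult_four_block_mat) (use C c F' in auto)
  also have "\<dots> = 0\<^sub>m (Suc k) n" using CF' cF' C c by simp
  finally have 4: "C' * F' = 0\<^sub>m (Suc k) n" .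
  have "B' * C' = four_block_mat (B * C + b * c) (B * 0\<^sub>m k 0 + b * 0\<^sub>m 1 0)
      (0\<^sub>m 0 k * C + 0\<^sub>m 0 1 * c) (0\<^sub>m 0 k * 0\<^sub>m k 0 + 0\<^sub>m 0 1 * 0\<^sub>m 1 0)"
    unfolding B'_def C'_def by (rule mult_four_block_mat) (use B C b c in auto)
  also have "\<dots> = B * C + b * c"
    by (rule four_block_degen[of _ n n]) (use B C b c in auto)
  finally have "B' * C' + F' = (B * C + b * c) + (F - b * c)" by (simp add: F'_def)
  also have "\<dots> = B * C + F" by (rule add_minus_cancel_mat) (use B C bc F in auto)
  finally have 5: "B' * C' + F' = B * C + F" .
  show ?thesis using B' C' F' 1 2 3 4 5 by blast
qed

lemma idem_aux:
  fixes F :: "'a::field mat"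
  shows "\<forall>k B C F. n - k = m \<longrightarrow> B \<in> carrier_mat n k \<longrightarrow> C \<in> carrier_mat k n \<longrightarrow> F \<in> carrier_mat n n \<longrightarrow>
    C * B = 1\<^sub>m k \<longrightarrow> F * F = F \<longrightarrow> F * B = 0\<^sub>m n k \<longrightarrow> C * F = 0\<^sub>m k n \<longrightarrow>
    (\<exists>r B' C'. B' \<in> carrier_mat n r \<and> C' \<in> carrier_mat r n \<and> C' * B' = 1\<^sub>m r \<and> B' * C' = B * C + (F :: 'a mat))"
proof (induction m rule: less_induct)
  case (less m)
  show ?case
  proof (intro allI impI)
    fix k and B C F :: "'a mat"
    assume m: "n - k = m" and B: "B \<in> carrier_mat n k" and C: "C \<in> carrier_mat k n" and F: "F \<in> carrier_mat n n"
      and CB: "C * B = 1\<^sub>m k" and FF: "F * F = F" and FB: "F * B = 0\<^sub>m n k" and CF: "C * F = 0\<^sub>m k n"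
    show "\<exists>r B' C'. B' \<in> carrier_mat n r \<and> C' \<in> carrier_mat r n \<and> C' * B' = 1\<^sub>m r \<and> B' * C' = B * C + F"
    proof (cases "F = 0\<^sub>m n n")
      case True
      then show ?thesis using B C by (intro exI[of _ k] exI[of _ B] exI[of _ C]) (simp add: CB)
    next
      case False
      obtain b c where b: "b \<in> carrier_mat n 1" and c: "c \<in> carrier_mat 1 n" and Fb: "F * b = b"
        and cF: "c * F = c" and cb: "c * b = 1\<^sub>m 1"
        using idem_col_row[OF F FF False] by blast
      obtain B' C' F' where B': "B' \<in> carrier_mat n (Suc k)" and C': "C' \<in> carrier_mat (Suc k) n"
        and F': "F' \<in> carrier_mat n n" and 1: "C' * B' = 1\<^sub>m (Suc k)" and 2: "F' * F' = F'"
        and 3: "F' * B' = 0\<^sub>m n (Suc k)" and 4: "C' * F' = 0\<^sub>m (Suc k) n" and 5: "B' * C' + F' = B * C + F"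
        using ext_step[OF F B C b c CB FF FB CF Fb cF cb] by blast
      have "Suc k \<le> n" using left_inv_bound[OF B' C' 1] .
      then have lt: "n - Suc k < m" using m by simp
      from less.IH[OF lt, rule_format, OF refl B' C' F' 1 2 3 4] 5 show ?thesis by metis
    qed
  qed
qed

lemma idem_factor:
  fixes E :: "'a::field mat"
  assumes E: "E \<in> carrier_mat n n" and EE: "E * E = E"
  shows "\<exists>r B C. B \<in> carrier_mat n r \<and> C \<in> carrier_mat r n \<and> C * B = 1\<^sub>m r \<and> B * C = E"
proof -
  have "\<exists>r B' C'. B' \<in> carrier_mat n r \<and> C' \<in> carrier_mat r n \<and> C' * B' = 1\<^sub>m r \<and>
      B' * C' = 0\<^sub>m n 0 * 0\<^sub>m 0 n + E"
    by (rule idem_aux[rule_format, OF refl]) (use E EE in auto)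
  then show ?thesis using E by simp
qed

lemma mat_vec_zero_r[simp]: "A \<in> carrier_mat nr nc \<Longrightarrow> A *\<^sub>v 0\<^sub>v nc = 0\<^sub>v nr"
  by (intro eq_vecI) auto

lemma zero_mat_vec_l[simp]: "v \<in> carrier_vec nc \<Longrightarrow> 0\<^sub>m nr nc *\<^sub>v v = (0\<^sub>v nr :: 'a :: semiring_0 vec)"
  by (intro eq_vecI) auto

lemma mat_eq_by_vec:
  fixes A B :: "'a::field mat"
  assumes A: "A \<in> carrier_mat nr nc" and B: "B \<in> carrier_mat nr nc"
    and eq: "\<And>v. v \<in> carrier_vec nc \<Longrightarrow> A *\<^sub>v v = B *\<^sub>v v"
  shows "A = B"
proof (rule eq_matI)
  fix i j assume "i < dim_row B" "j < dim_col B"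
  then have i: "i < nr" and j: "j < nc" using B by auto
  have "A $$ (i,j) = (A *\<^sub>v unit_vec nc j) $ i" using A i j by simp
  also have "\<dots> = (B *\<^sub>v unit_vec nc j) $ i" using eq[of "unit_vec nc j"] by simp
  also have "\<dots> = B $$ (i,j)" using B i j by simp
  finally show "A $$ (i,j) = B $$ (i,j)" .
qed (use A B in auto)

definition zz_split :: "('a::field) zz \<Rightarrow> (int \<Rightarrow> 'a mat) \<Rightarrow> bool" where
  "zz_split V E \<longleftrightarrow> (\<forall>i. E i \<in> carrier_mat (zdim V i) (zdim V i) \<and> E i * E i = E i) \<and>
    (\<forall>i. even i \<longrightarrow> E (i - 1) * zg V i = zg V i * E i \<and> E (i + 1) * zf V i = zf V i * E i)"

lemma subspace_fix:
  fixes E :: "'a::field mat"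
  assumes E: "E \<in> carrier_mat n n"
  shows "is_subspace n {v \<in> carrier_vec n. E *\<^sub>v v = v}" "is_subspace n {v \<in> carrier_vec n. E *\<^sub>v v = 0\<^sub>v n}"
  unfolding is_subspace_def using E
  by (auto simp: mult_add_distrib_mat_vec[OF E] mult_mat_vec[OF E])

lemma inv_fix:
  fixes E E' g :: "'a::field mat"
  assumes E: "E \<in> carrier_mat n n" and E': "E' \<in> carrier_mat n' n'" and g: "g \<in> carrier_mat n' n"
    and c: "E' * g = g * E" and v: "v \<in> carrier_vec n"
  shows "E *\<^sub>v v = v \<Longrightarrow> E' *\<^sub>v (g *\<^sub>v v) = g *\<^sub>v v"
    and "E *\<^sub>v v = 0\<^sub>v n \<Longrightarrow> E' *\<^sub>v (g *\<^sub>v v) = 0\<^sub>v n'"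
proof -
  have "E' *\<^sub>v (g *\<^sub>v v) = g *\<^sub>v (E *\<^sub>v v)"
    using assoc_mult_mat_vec[OF E' g v, symmetric] assoc_mult_mat_vec[OF g E v] c by simp
  then show "E *\<^sub>v v = v \<Longrightarrow> E' *\<^sub>v (g *\<^sub>v v) = g *\<^sub>v v"
    and "E *\<^sub>v v = 0\<^sub>v n \<Longrightarrow> E' *\<^sub>v (g *\<^sub>v v) = 0\<^sub>v n'" using g by auto
qed

lemma split_to_internal:
  fixes V :: "('a::field) zz"
  assumes V: "zz_module V" and E: "zz_split V E"
  shows "\<exists>S1 S2. zz_internal_decomp V S1 S2 \<and>
    (\<forall>i. E i \<noteq> 0\<^sub>m (zdim V i) (zdim V i) \<longrightarrow> S1 i \<noteq> {0\<^sub>v (zdim V i)}) \<and>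
    (\<forall>i. E i \<noteq> 1\<^sub>m (zdim V i) \<longrightarrow> S2 i \<noteq> {0\<^sub>v (zdim V i)})"
proof -
  define S1 where "S1 i = {v \<in> carrier_vec (zdim V i). E i *\<^sub>v v = v}" for i
  define S2 where "S2 i = {v \<in> carrier_vec (zdim V i). E i *\<^sub>v v = 0\<^sub>v (zdim V i)}" for i
  have Ec: "E i \<in> carrier_mat (zdim V i) (zdim V i)" and EE: "E i * E i = E i" for i
    using E unfolding zz_split_def by auto
  have gc: "even i \<Longrightarrow> zg V i \<in> carrier_mat (zdim V (i - 1)) (zdim V i)"
   and fc: "even i \<Longrightarrow> zf V i \<in> carrier_mat (zdim V (i + 1)) (zdim V i)" for i
    using V unfolding zz_module_def by auto
  have gcom: "even i \<Longrightarrow> E (i - 1) * zg V i = zg V i * E i"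
   and fcom: "even i \<Longrightarrow> E (i + 1) * zf V i = zf V i * E i" for i
    using E unfolding zz_split_def by auto
  have gv: "zg V i *\<^sub>v v \<in> carrier_vec (zdim V (i - 1))"
     and fv: "zf V i *\<^sub>v v \<in> carrier_vec (zdim V (i + 1))"
     if "even i" "v \<in> carrier_vec (zdim V i)" for i v
    using gc[OF that(1)] fc[OF that(1)] that(2) by auto
  have sub1: "zz_submodule V S1"
    unfolding zz_submodule_def S1_def
    using subspace_fix(1)[OF Ec] inv_fix(1)[OF Ec Ec gc gcom] inv_fix(1)[OF Ec Ec fc fcom] gv fv
    by auto
  have sub2: "zz_submodule V S2"
    unfolding zz_submodule_def S2_def
    using subspace_fix(2)[OF Ec] inv_fix(2)[OF Ec Ec gc gcom] inv_fix(2)[OF Ec Ec fc fcom] gv fv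
    by auto
  have int: "S1 i \<inter> S2 i = {0\<^sub>v (zdim V i)}" for i
    unfolding S1_def S2_def using Ec[of i] by auto
  have sum: "\<exists>u\<in>S1 i. \<exists>w\<in>S2 i. x = u + w" if x: "x \<in> carrier_vec (zdim V i)" for i x
  proof -
    have Ex: "E i *\<^sub>v x \<in> carrier_vec (zdim V i)" using Ec[of i] x by simp
    have "E i *\<^sub>v (E i *\<^sub>v x) = E i *\<^sub>v x"
      using assoc_mult_mat_vec[OF Ec Ec x, symmetric] EE by simp
    moreover have "E i *\<^sub>v (x - E i *\<^sub>v x) = 0\<^sub>v (zdim V i)"
      using mult_minus_distrib_mat_vec[OF Ec x Ex] \<open>E i *\<^sub>v (E i *\<^sub>v x) = E i *\<^sub>v x\<close> Ex by simp
    moreover have "x = E i *\<^sub>v x + (x - E i *\<^sub>v x)" using x Ex Ec[of i] by (intro eq_vecI) auto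
    ultimately show ?thesis unfolding S1_def S2_def using x Ex by (intro bexI[of _ "E i *\<^sub>v x"] bexI[of _ "x - E i *\<^sub>v x"]) auto
  qed
  have nz1: "S1 i \<noteq> {0\<^sub>v (zdim V i)}" if ne: "E i \<noteq> 0\<^sub>m (zdim V i) (zdim V i)" for i
  proof
    assume S: "S1 i = {0\<^sub>v (zdim V i)}"
    have "E i = 0\<^sub>m (zdim V i) (zdim V i)"
    proof (rule mat_eq_by_vec[OF Ec zero_carrier_mat])
      fix v :: "'a vec" assume v: "v \<in> carrier_vec (zdim V i)"
      obtain u w where u: "u \<in> S1 i" and w: "w \<in> S2 i" and vuw: "v = u + w" using sum[OF v] by blast
      have "u = 0\<^sub>v (zdim V i)" using u S by simp
      then have "v = w" using vuw w unfolding S2_def by simp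
      then show "E i *\<^sub>v v = 0\<^sub>m (zdim V i) (zdim V i) *\<^sub>v v" using w v unfolding S2_def by simp
    qed
    then show False using ne by simp
  qed
  have nz2: "S2 i \<noteq> {0\<^sub>v (zdim V i)}" if ne: "E i \<noteq> 1\<^sub>m (zdim V i)" for i
  proof
    assume S: "S2 i = {0\<^sub>v (zdim V i)}"
    have "E i = 1\<^sub>m (zdim V i)"
    proof (rule mat_eq_by_vec[OF Ec one_carrier_mat])
      fix v :: "'a vec" assume v: "v \<in> carrier_vec (zdim V i)"
      obtain u w where u: "u \<in> S1 i" and w: "w \<in> S2 i" and vuw: "v = u + w" using sum[OF v] by blast
      have "w = 0\<^sub>v (zdim V i)" using w S by simp
      then have "v = u" using vuw u unfolding S1_def by simp
      then show "E i *\<^sub>v v = 1\<^sub>m (zdim V i) *\<^sub>v v" using u v unfolding S1_def by simp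
    qed
    then show False using ne by simp
  qed
  show ?thesis
    using sub1 sub2 int sum nz1 nz2 unfolding zz_internal_decomp_def by blast
qed

lemma subspaceD:
  assumes "is_subspace n S"
  shows "S \<subseteq> carrier_vec n" "0\<^sub>v n \<in> S" "\<And>x y. x \<in> S \<Longrightarrow> y \<in> S \<Longrightarrow> x + y \<in> S"
    "\<And>a x. x \<in> S \<Longrightarrow> a \<cdot>\<^sub>v x \<in> S"
  using assms unfolding is_subspace_def by blast+

lemma decomp_uniq:
  fixes u u' w w' :: "'a::field vec"
  assumes A: "is_subspace n A" and B: "is_subspace n B" and AB: "A \<inter> B = {0\<^sub>v n}"
    and u: "u \<in> A" "u' \<in> A" and w: "w \<in> B" "w' \<in> B" and eq: "u + w = u' + w'"
  shows "u = u'"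
proof -
  have c: "u \<in> carrier_vec n" "u' \<in> carrier_vec n" "w \<in> carrier_vec n" "w' \<in> carrier_vec n"
    using subspaceD(1)[OF A] subspaceD(1)[OF B] u w by auto
  note Aa = subspaceD(3)[OF A] and As = subspaceD(4)[OF A]
  note Ba = subspaceD(3)[OF B] and Bs = subspaceD(4)[OF B]
  have "u + (-1) \<cdot>\<^sub>v u' \<in> A" using Aa[OF u(1) As[OF u(2)]] .
  moreover have "w' + (-1) \<cdot>\<^sub>v w \<in> B" using Ba[OF w(2) Bs[OF w(1)]] .
  moreover have "u + (-1) \<cdot>\<^sub>v u' = w' + (-1) \<cdot>\<^sub>v w"
  proof (rule eq_vecI)
    fix i assume "i < dim_vec (w' + (-1) \<cdot>\<^sub>v w)"
    then have i: "i < n" using c by simp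
    have "(u + w) $ i = (u' + w') $ i" using eq by simp
    then have h: "u $ i + w $ i = u' $ i + w' $ i" using i c by simp
    have "u $ i = u' $ i + w' $ i - w $ i" using h by (simp add: eq_diff_eq)
    then have "u $ i + (-1) * u' $ i = w' $ i + (-1) * w $ i" by simp
    then show "(u + (-1) \<cdot>\<^sub>v u') $ i = (w' + (-1) \<cdot>\<^sub>v w) $ i" using i c by simp
  qed (use c in simp)
  ultimately have "u + (-1) \<cdot>\<^sub>v u' \<in> A \<inter> B" by simp
  then have "u + (-1) \<cdot>\<^sub>v u' = 0\<^sub>v n" unfolding AB by simp
  then show "u = u'"
  proof -
    assume h: "u + (-1) \<cdot>\<^sub>v u' = 0\<^sub>v n"
    show ?thesis
    proof (rule eq_vecI)
      fix i assume "i < dim_vec u'"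
      then have i: "i < n" using c by simp
      have "(u + (-1) \<cdot>\<^sub>v u') $ i = 0" using h i by simp
      then have "u $ i + (-1) * u' $ i = 0" using i c by simp
      then have "u $ i - u' $ i = 0" by simp
      then show "u $ i = u' $ i" by simp
    qed (use c in simp)
  qed
qed

lemma proj_mat:
  fixes A B :: "'a::field vec set"
  assumes A: "is_subspace n A" and B: "is_subspace n B"
    and sum: "\<forall>x\<in>carrier_vec n. \<exists>u\<in>A. \<exists>w\<in>B. x = u + w"
  shows "\<exists>P. P \<in> carrier_mat n n \<and> (\<forall>v\<in>carrier_vec n. P *\<^sub>v v \<in> A \<and> v - P *\<^sub>v v \<in> B)"
proof -
  have ex: "\<forall>c. \<exists>p. c < n \<longrightarrow> fst p \<in> A \<and> snd p \<in> B \<and> unit_vec n c = fst p + snd p"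
  proof
    fix c
    show "\<exists>p. c < n \<longrightarrow> fst p \<in> A \<and> snd p \<in> B \<and> unit_vec n c = fst p + snd p"
    proof (cases "c < n")
      case True
      obtain a b where "a \<in> A" "b \<in> B" "unit_vec n c = a + b" using sum unit_vec_carrier by blast
      then show ?thesis by (intro exI[of _ "(a,b)"]) simp
    qed simp
  qed
  obtain uw where uw: "\<And>c. c < n \<Longrightarrow> fst (uw c) \<in> A \<and> snd (uw c) \<in> B \<and> unit_vec n c = fst (uw c) + snd (uw c)"
    using choice[OF ex] by blast
  define u where "u c = fst (uw c)" for c
  define w where "w c = snd (uw c)" for c
  have uA: "c < n \<Longrightarrow> u c \<in> A" and wB: "c < n \<Longrightarrow> w c \<in> B" and e: "c < n \<Longrightarrow> unit_vec n c = u c + w c" for c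
    using uw unfolding u_def w_def by auto
  note Ac = subspaceD(1)[OF A] and Bc = subspaceD(1)[OF B]
  note Aa = subspaceD(3)[OF A] and As = subspaceD(4)[OF A] and A0 = subspaceD(2)[OF A]
  note Ba = subspaceD(3)[OF B] and Bs = subspaceD(4)[OF B] and B0 = subspaceD(2)[OF B]
  define P where "P = mat n n (\<lambda>(r,c). u c $ r)"
  have P: "P \<in> carrier_mat n n" unfolding P_def by simp
  have Pe: "P *\<^sub>v unit_vec n c = u c" if c: "c < n" for c
  proof (rule eq_vecI)
    have uc: "u c \<in> carrier_vec n" using uA[OF c] Ac by auto
    fix r assume "r < dim_vec (u c)"
    then have r: "r < n" using uc by simp
    have "(P *\<^sub>v unit_vec n c) $ r = row P r \<bullet> unit_vec n c" using P r by simp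
    also have "\<dots> = row P r $ c" using c P r by (intro scalar_prod_right_unit) auto
    also have "\<dots> = u c $ r" using c r by (simp add: P_def)
    finally show "(P *\<^sub>v unit_vec n c) $ r = u c $ r" .
  next
    show "dim_vec (P *\<^sub>v unit_vec n c) = dim_vec (u c)" using P uA[OF c] Ac by auto
  qed
  have main: "\<forall>v\<in>carrier_vec n. P *\<^sub>v v \<in> A \<and> v - P *\<^sub>v v \<in> B"
  proof
    fix v :: "'a vec" assume v: "v \<in> carrier_vec n"
    define vm where "vm m = vec n (\<lambda>r. if r < m then v $ r else 0)" for m
    have vmc: "vm m \<in> carrier_vec n" for m unfolding vm_def by simp
    have "m \<le> n \<longrightarrow> P *\<^sub>v vm m \<in> A \<and> vm m - P *\<^sub>v vm m \<in> B" for m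
    proof (induction m)
      case 0
      have "vm 0 = 0\<^sub>v n" unfolding vm_def by (intro eq_vecI) auto
      then show ?case using A0 B0 P by simp
    next
      case (Suc m)
      show ?case
      proof
        assume m: "Suc m \<le> n"
        then have IH: "P *\<^sub>v vm m \<in> A" "vm m - P *\<^sub>v vm m \<in> B" using Suc.IH by auto
        have mn: "m < n" using m by simp
        have uc: "u m \<in> carrier_vec n" and wc: "w m \<in> carrier_vec n" using uA[OF mn] wB[OF mn] Ac Bc by auto
        have vS: "vm (Suc m) = vm m + v $ m \<cdot>\<^sub>v unit_vec n m"
          unfolding vm_def using mn by (intro eq_vecI) (auto simp: less_Suc_eq)
        have PvS: "P *\<^sub>v vm (Suc m) = P *\<^sub>v vm m + v $ m \<cdot>\<^sub>v u m"
          unfolding vS using mult_add_distrib_mat_vec[OF P vmc, of "v $ m \<cdot>\<^sub>v unit_vec n m"]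
            mult_mat_vec[OF P unit_vec_carrier, of "v $ m" m] Pe[OF mn] by simp
        have Pvm: "P *\<^sub>v vm m \<in> carrier_vec n" using P vmc by simp
        have 1: "P *\<^sub>v vm (Suc m) \<in> A" unfolding PvS using IH(1) uA[OF mn] Aa As by blast
        have "vm (Suc m) - P *\<^sub>v vm (Suc m) = (vm m - P *\<^sub>v vm m) + v $ m \<cdot>\<^sub>v w m"
        proof (rule eq_vecI)
          fix r assume "r < dim_vec ((vm m - P *\<^sub>v vm m) + v $ m \<cdot>\<^sub>v w m)"
          then have r: "r < n" using vmc wc by simp
          have ue: "unit_vec n m $ r = u m $ r + w m $ r" using e[OF mn] r uc wc by simp
          have "(vm (Suc m) - P *\<^sub>v vm (Suc m)) $ r = (vm m $ r + v $ m * unit_vec n m $ r) - ((P *\<^sub>v vm m) $ r + v $ m * u m $ r)"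
            unfolding PvS unfolding vS using r uc wc Pvm vmc by simp
          also have "\<dots> = (vm m $ r - (P *\<^sub>v vm m) $ r) + v $ m * w m $ r"
            unfolding ue by (simp add: distrib_left)
          also have "\<dots> = ((vm m - P *\<^sub>v vm m) + v $ m \<cdot>\<^sub>v w m) $ r"
            using r uc wc Pvm vmc P by simp
          finally show "(vm (Suc m) - P *\<^sub>v vm (Suc m)) $ r = ((vm m - P *\<^sub>v vm m) + v $ m \<cdot>\<^sub>v w m) $ r" .
        qed (use PvS vS uc wc Pvm vmc in simp)
        then have 2: "vm (Suc m) - P *\<^sub>v vm (Suc m) \<in> B" using IH(2) wB[OF mn] Ba Bs by simp
        show "P *\<^sub>v vm (Suc m) \<in> A \<and> vm (Suc m) - P *\<^sub>v vm (Suc m) \<in> B" using 1 2 by simp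
      qed
    qed
    moreover have "vm n = v" unfolding vm_def using v by (intro eq_vecI) auto
    ultimately show "P *\<^sub>v v \<in> A \<and> v - P *\<^sub>v v \<in> B" by force
  qed
  show ?thesis using P main by blast
qed

lemma vec_split_eq: "v \<in> carrier_vec n \<Longrightarrow> x \<in> carrier_vec n \<Longrightarrow> x + (v - x) = (v :: 'a :: ab_group_add vec)"
  by (intro eq_vecI) auto

lemma internal_to_split:
  fixes V :: "('a::field) zz"
  assumes V: "zz_module V" and D: "zz_internal_decomp V S1 S2"
  shows "\<exists>E. zz_split V E \<and> (\<forall>i. S1 i \<noteq> {0\<^sub>v (zdim V i)} \<longrightarrow> E i \<noteq> 0\<^sub>m (zdim V i) (zdim V i)) \<and>
    (\<forall>i. S2 i \<noteq> {0\<^sub>v (zdim V i)} \<longrightarrow> E i \<noteq> 1\<^sub>m (zdim V i))"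
proof -
  have sp1: "is_subspace (zdim V i) (S1 i)" and sp2: "is_subspace (zdim V i) (S2 i)" for i
    using D unfolding zz_internal_decomp_def zz_submodule_def by auto
  have int: "S1 i \<inter> S2 i = {0\<^sub>v (zdim V i)}" for i using D unfolding zz_internal_decomp_def by auto
  have sum: "\<forall>x\<in>carrier_vec (zdim V i). \<exists>u\<in>S1 i. \<exists>w\<in>S2 i. x = u + w" for i
    using D unfolding zz_internal_decomp_def by auto
  have m1: "\<And>v. v \<in> S1 i \<Longrightarrow> zg V i *\<^sub>v v \<in> S1 (i - 1) \<and> zf V i *\<^sub>v v \<in> S1 (i + 1)"
   and m2: "\<And>v. v \<in> S2 i \<Longrightarrow> zg V i *\<^sub>v v \<in> S2 (i - 1) \<and> zf V i *\<^sub>v v \<in> S2 (i + 1)"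
    if "even i" for i
    using D that unfolding zz_internal_decomp_def zz_submodule_def by auto
  have gc: "even i \<Longrightarrow> zg V i \<in> carrier_mat (zdim V (i - 1)) (zdim V i)"
   and fc: "even i \<Longrightarrow> zf V i \<in> carrier_mat (zdim V (i + 1)) (zdim V i)" for i
    using V unfolding zz_module_def by auto
  have "\<forall>i. \<exists>P. P \<in> carrier_mat (zdim V i) (zdim V i) \<and> (\<forall>v\<in>carrier_vec (zdim V i). P *\<^sub>v v \<in> S1 i \<and> v - P *\<^sub>v v \<in> S2 i)"
    using proj_mat[OF sp1 sp2 sum] by blast
  then obtain E where Ec: "\<And>i. E i \<in> carrier_mat (zdim V i) (zdim V i)"
    and Ep: "\<And>i v. v \<in> carrier_vec (zdim V i) \<Longrightarrow> E i *\<^sub>v v \<in> S1 i \<and> v - E i *\<^sub>v v \<in> S2 i"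
    using choice[of "\<lambda>i P. P \<in> carrier_mat (zdim V i) (zdim V i) \<and> (\<forall>v\<in>carrier_vec (zdim V i). P *\<^sub>v v \<in> S1 i \<and> v - P *\<^sub>v v \<in> S2 i)"]
    by metis
  have uniq: "E i *\<^sub>v v = u" if v: "v \<in> carrier_vec (zdim V i)" and u: "u \<in> S1 i" and w: "w \<in> S2 i"
    and vuw: "v = u + w" for i v u w
  proof -
    have Evc: "E i *\<^sub>v v \<in> carrier_vec (zdim V i)" using Ec[of i] v by simp
    have "E i *\<^sub>v v + (v - E i *\<^sub>v v) = u + w" using vec_split_eq[OF v Evc] vuw by simp
    then show ?thesis using decomp_uniq[OF sp1 sp2 int _ u _ w] Ep[OF v] by blast
  qed
  have S1c: "S1 i \<subseteq> carrier_vec (zdim V i)" and S2c: "S2 i \<subseteq> carrier_vec (zdim V i)" for i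
    using subspaceD(1)[OF sp1] subspaceD(1)[OF sp2] by auto
  have EE: "E i * E i = E i" for i
  proof (rule mat_eq_by_vec[OF mult_carrier_mat[OF Ec Ec] Ec])
    fix v :: "'a vec" assume v: "v \<in> carrier_vec (zdim V i)"
    have Ev: "E i *\<^sub>v v \<in> S1 i" using Ep[OF v] by simp
    have Evc: "E i *\<^sub>v v \<in> carrier_vec (zdim V i)" using Ec[of i] v by simp
    have "E i *\<^sub>v (E i *\<^sub>v v) = E i *\<^sub>v v"
      using uniq[OF Evc Ev subspaceD(2)[OF sp2]] Evc by simp
    then show "(E i * E i) *\<^sub>v v = E i *\<^sub>v v" using assoc_mult_mat_vec[OF Ec Ec v] by simp
  qed
  have com: "E j * h = h * E i" if h: "h \<in> carrier_mat (zdim V j) (zdim V i)"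
    and hm: "\<And>v. v \<in> S1 i \<Longrightarrow> h *\<^sub>v v \<in> S1 j" "\<And>v. v \<in> S2 i \<Longrightarrow> h *\<^sub>v v \<in> S2 j" for i j h
  proof (rule mat_eq_by_vec[OF mult_carrier_mat[OF Ec h] mult_carrier_mat[OF h Ec]])
    fix v :: "'a vec" assume v: "v \<in> carrier_vec (zdim V i)"
    have Evc: "E i *\<^sub>v v \<in> carrier_vec (zdim V i)" using Ec[of i] v by simp
    have Wc: "v - E i *\<^sub>v v \<in> carrier_vec (zdim V i)" using Evc v by simp
    have "h *\<^sub>v v = h *\<^sub>v (E i *\<^sub>v v) + h *\<^sub>v (v - E i *\<^sub>v v)"
      using mult_add_distrib_mat_vec[OF h Evc Wc, symmetric] vec_split_eq[OF v Evc] by simp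
    then have "E j *\<^sub>v (h *\<^sub>v v) = h *\<^sub>v (E i *\<^sub>v v)"
      using uniq[OF _ hm(1) hm(2)] Ep[OF v] h v by (metis mult_mat_vec_carrier)
    then show "(E j * h) *\<^sub>v v = (h * E i) *\<^sub>v v"
      using assoc_mult_mat_vec[OF Ec h v] assoc_mult_mat_vec[OF h Ec v] by simp
  qed
  have split: "zz_split V E"
    unfolding zz_split_def
  proof (intro conjI allI impI)
    fix i show "E i \<in> carrier_mat (zdim V i) (zdim V i)" using Ec .
    show "E i * E i = E i" using EE .
  next
    fix i :: int assume i: "even i"
    show "E (i - 1) * zg V i = zg V i * E i"
      by (rule com[OF gc[OF i]]) (use m1[OF i] m2[OF i] in auto)
    show "E (i + 1) * zf V i = zf V i * E i"
      by (rule com[OF fc[OF i]]) (use m1[OF i] m2[OF i] in auto)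
  qed
  have nz1: "E i \<noteq> 0\<^sub>m (zdim V i) (zdim V i)" if S: "S1 i \<noteq> {0\<^sub>v (zdim V i)}" for i
  proof
    assume E0: "E i = 0\<^sub>m (zdim V i) (zdim V i)"
    obtain u where u: "u \<in> S1 i" "u \<noteq> 0\<^sub>v (zdim V i)" using S subspaceD(2)[OF sp1] by blast
    have uc: "u \<in> carrier_vec (zdim V i)" using u S1c by auto
    have "E i *\<^sub>v u = u" using uniq[OF uc u(1) subspaceD(2)[OF sp2]] uc by simp
    then show False using E0 uc u(2) by simp
  qed
  have nz2: "E i \<noteq> 1\<^sub>m (zdim V i)" if S: "S2 i \<noteq> {0\<^sub>v (zdim V i)}" for i
  proof
    assume E1: "E i = 1\<^sub>m (zdim V i)"
    obtain w where w: "w \<in> S2 i" "w \<noteq> 0\<^sub>v (zdim V i)" using S subspaceD(2)[OF sp2] by blast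
    have wc: "w \<in> carrier_vec (zdim V i)" using w S2c by auto
    have "E i *\<^sub>v w = 0\<^sub>v (zdim V i)" using uniq[OF wc subspaceD(2)[OF sp1] w(1)] wc by simp
    then show False using E1 wc w(2) by simp
  qed
  show ?thesis using split nz1 nz2 by blast
qed

lemma assoc_eq:
  assumes "A \<in> carrier_mat n1 n2" "B \<in> carrier_mat n2 n3" "C \<in> carrier_mat n1 n4" "D \<in> carrier_mat n4 n3"
    "X \<in> carrier_mat n3 n5" "A * B = C * D"
  shows "A * (B * X) = C * (D * (X :: 'a :: semiring_1 mat))"
  using assms assoc_mult_mat[of A n1 n2 B n3 X n5] assoc_mult_mat[of C n1 n4 D n3 X n5] by simp

lemma cancel_left:
  assumes "A \<in> carrier_mat s d" "B \<in> carrier_mat d s" "X \<in> carrier_mat s m" "A * B = 1\<^sub>m s"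
  shows "A * (B * X) = (X :: 'a :: semiring_1 mat)"
  using assms assoc_mult_mat[of A s d B s X m] by simp

lemma conj_idem:
  fixes \<psi> P \<phi> :: "'a::field mat"
  assumes c: "\<psi> \<in> carrier_mat d s" "P \<in> carrier_mat s s" "\<phi> \<in> carrier_mat s d"
    and inv: "\<phi> * \<psi> = 1\<^sub>m s" and PP: "P * P = P"
  shows "(\<psi> * P * \<phi>) * (\<psi> * P * \<phi>) = \<psi> * P * \<phi>"
proof -
  have \<psi>P: "\<psi> * P \<in> carrier_mat d s" using c by simp
  have X: "\<psi> * P * \<phi> \<in> carrier_mat d d" using c by simp
  have "\<phi> * (\<psi> * P) = (\<phi> * \<psi>) * P" using assoc_mult_mat[OF c(3) c(1) c(2)] by simp
  then have 1: "\<phi> * (\<psi> * P) = P" using inv c by simp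
  have "\<phi> * (\<psi> * P * \<phi>) = (\<phi> * (\<psi> * P)) * \<phi>" using assoc_mult_mat[OF c(3) \<psi>P c(3)] by simp
  then have 2: "\<phi> * (\<psi> * P * \<phi>) = P * \<phi>" using 1 by simp
  have "(\<psi> * P * \<phi>) * (\<psi> * P * \<phi>) = (\<psi> * P) * (\<phi> * (\<psi> * P * \<phi>))"
    using assoc_mult_mat[OF \<psi>P c(3) X] .
  also have "\<dots> = (\<psi> * P) * (P * \<phi>)" using 2 by simp
  also have "\<dots> = ((\<psi> * P) * P) * \<phi>" using assoc_mult_mat[OF \<psi>P c(2) c(3)] by simp
  also have "(\<psi> * P) * P = \<psi> * P" using assoc_mult_mat[OF c(1) c(2) c(2)] PP by simp
  finally show ?thesis .
qed

lemma conj_comm: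
  fixes \<psi> P \<phi> :: "'a::field mat"
  assumes c: "\<psi>' \<in> carrier_mat d' s'" "P' \<in> carrier_mat s' s'" "\<phi>' \<in> carrier_mat s' d'"
    "g \<in> carrier_mat d' d" "h \<in> carrier_mat s' s"
    "\<psi> \<in> carrier_mat d s" "P \<in> carrier_mat s s" "\<phi> \<in> carrier_mat s d"
    and e1: "\<phi>' * g = h * \<phi>" and e2: "P' * h = h * P" and e3: "\<psi>' * h = g * \<psi>"
  shows "(\<psi>' * P' * \<phi>') * g = g * (\<psi> * P * \<phi>)"
proof -
  have a: "\<psi>' * P' \<in> carrier_mat d' s'" using c by simp
  have "(\<psi>' * P' * \<phi>') * g = (\<psi>' * P') * (\<phi>' * g)" using assoc_mult_mat[OF a c(3) c(4)] .
  also have "\<dots> = (\<psi>' * P') * (h * \<phi>)" using e1 by simp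
  also have "\<dots> = ((\<psi>' * P') * h) * \<phi>" using assoc_mult_mat[OF a c(5) c(8)] by simp
  also have "(\<psi>' * P') * h = \<psi>' * (P' * h)" using assoc_mult_mat[OF c(1) c(2) c(5)] .
  also have "\<dots> = \<psi>' * (h * P)" using e2 by simp
  also have "\<dots> = (\<psi>' * h) * P" using assoc_mult_mat[OF c(1) c(5) c(7)] by simp
  also have "\<dots> = (g * \<psi>) * P" using e3 by simp
  also have "\<dots> = g * (\<psi> * P)" using assoc_mult_mat[OF c(4) c(6) c(7)] .
  also have "(g * (\<psi> * P)) * \<phi> = g * ((\<psi> * P) * \<phi>)"
    using assoc_mult_mat[OF c(4) _ c(8), of "\<psi> * P"] c by simp
  finally show ?thesis .
qed

lemma block_comm:
  fixes A D :: "'a::field mat"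
  assumes A: "A \<in> carrier_mat a' a" and D: "D \<in> carrier_mat b' b"
  shows "four_block_mat (1\<^sub>m a') (0\<^sub>m a' b') (0\<^sub>m b' a') (0\<^sub>m b' b') * four_block_mat A (0\<^sub>m a' b) (0\<^sub>m b' a) D
    = four_block_mat A (0\<^sub>m a' b) (0\<^sub>m b' a) D * four_block_mat (1\<^sub>m a) (0\<^sub>m a b) (0\<^sub>m b a) (0\<^sub>m b b)"
proof -
  have "four_block_mat (1\<^sub>m a') (0\<^sub>m a' b') (0\<^sub>m b' a') (0\<^sub>m b' b') * four_block_mat A (0\<^sub>m a' b) (0\<^sub>m b' a) D
    = four_block_mat (1\<^sub>m a' * A + 0\<^sub>m a' b' * 0\<^sub>m b' a) (1\<^sub>m a' * 0\<^sub>m a' b + 0\<^sub>m a' b' * D)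
        (0\<^sub>m b' a' * A + 0\<^sub>m b' b' * 0\<^sub>m b' a) (0\<^sub>m b' a' * 0\<^sub>m a' b + 0\<^sub>m b' b' * D)"
    by (rule mult_four_block_mat) (use A D in auto)
  also have "\<dots> = four_block_mat A (0\<^sub>m a' b) (0\<^sub>m b' a) (0\<^sub>m b' b)" using A D by simp
  also have "\<dots> = four_block_mat (A * 1\<^sub>m a + 0\<^sub>m a' b * 0\<^sub>m b a) (A * 0\<^sub>m a b + 0\<^sub>m a' b * 0\<^sub>m b b)
        (0\<^sub>m b' a * 1\<^sub>m a + D * 0\<^sub>m b a) (0\<^sub>m b' a * 0\<^sub>m a b + D * 0\<^sub>m b b)" using A D by simp
  also have "\<dots> = four_block_mat A (0\<^sub>m a' b) (0\<^sub>m b' a) D * four_block_mat (1\<^sub>m a) (0\<^sub>m a b) (0\<^sub>m b a) (0\<^sub>m b b)"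
    by (rule mult_four_block_mat[symmetric]) (use A D in auto)
  finally show ?thesis .
qed

lemma decomp_to_split:
  fixes V :: "('a::field) zz"
  assumes V: "zz_module V" and dec: "zz_decomposable V"
  shows "\<exists>E. zz_split V E \<and> (\<exists>i. E i \<noteq> 0\<^sub>m (zdim V i) (zdim V i)) \<and> (\<exists>j. E j \<noteq> 1\<^sub>m (zdim V j))"
proof -
  obtain U W where U: "zz_module U" and W: "zz_module W" and U0: "\<not> zz_zero U" and W0: "\<not> zz_zero W"
    and iso: "zz_iso V (zz_sum U W)" using dec unfolding zz_decomposable_def by blast
  define S where "S = zz_sum U W"
  obtain \<phi> \<psi> where h1: "zz_hom V S \<phi>" and h2: "zz_hom S V \<psi>"
    and inv: "\<And>i. \<psi> i * \<phi> i = 1\<^sub>m (zdim V i) \<and> \<phi> i * \<psi> i = 1\<^sub>m (zdim S i)"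
    using iso unfolding zz_iso_def S_def by blast
  define a where "a = zdim U"
  define b where "b = zdim W"
  define d where "d = zdim V"
  have dS: "zdim S i = a i + b i" for i unfolding S_def zz_sum_def a_def b_def by simp
  have gS: "zg S i = four_block_mat (zg U i) (0\<^sub>m (a (i - 1)) (b i)) (0\<^sub>m (b (i - 1)) (a i)) (zg W i)"
   and fS: "zf S i = four_block_mat (zf U i) (0\<^sub>m (a (i + 1)) (b i)) (0\<^sub>m (b (i + 1)) (a i)) (zf W i)" for i
    unfolding S_def zz_sum_def a_def b_def by simp_all
  have \<phi>c: "\<phi> i \<in> carrier_mat (a i + b i) (d i)" for i using h1 dS unfolding zz_hom_def d_def by metis
  have \<psi>c: "\<psi> i \<in> carrier_mat (d i) (a i + b i)" for i using h2 dS unfolding zz_hom_def d_def by metis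
  have \<phi>g: "even i \<Longrightarrow> \<phi> (i - 1) * zg V i = zg S i * \<phi> i \<and> \<phi> (i + 1) * zf V i = zf S i * \<phi> i" for i
    using h1 unfolding zz_hom_def by blast
  have \<psi>g: "even i \<Longrightarrow> \<psi> (i - 1) * zg S i = zg V i * \<psi> i \<and> \<psi> (i + 1) * zf S i = zf V i * \<psi> i" for i
    using h2 unfolding zz_hom_def by blast
  have inv1: "\<psi> i * \<phi> i = 1\<^sub>m (d i)" and inv2: "\<phi> i * \<psi> i = 1\<^sub>m (a i + b i)" for i
    using inv dS unfolding d_def by auto
  have gUc: "even i \<Longrightarrow> zg U i \<in> carrier_mat (a (i - 1)) (a i)" and fUc: "even i \<Longrightarrow> zf U i \<in> carrier_mat (a (i + 1)) (a i)"
   and gWc: "even i \<Longrightarrow> zg W i \<in> carrier_mat (b (i - 1)) (b i)" and fWc: "even i \<Longrightarrow> zf W i \<in> carrier_mat (b (i + 1)) (b i)" for i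
    using U W unfolding zz_module_def a_def b_def by auto
  have gVc: "even i \<Longrightarrow> zg V i \<in> carrier_mat (d (i - 1)) (d i)" and fVc: "even i \<Longrightarrow> zf V i \<in> carrier_mat (d (i + 1)) (d i)" for i
    using V unfolding zz_module_def d_def by auto
  define P :: "int \<Rightarrow> 'a mat" where "P i = four_block_mat (1\<^sub>m (a i)) (0\<^sub>m (a i) (b i)) (0\<^sub>m (b i) (a i)) (0\<^sub>m (b i) (b i))" for i
  have Pc: "P i \<in> carrier_mat (a i + b i) (a i + b i)" for i unfolding P_def by simp
  have PP: "P i * P i = P i" for i
  proof -
    have "P i * P i = four_block_mat (1\<^sub>m (a i) * 1\<^sub>m (a i) + 0\<^sub>m (a i) (b i) * 0\<^sub>m (b i) (a i))
      (1\<^sub>m (a i) * 0\<^sub>m (a i) (b i) + 0\<^sub>m (a i) (b i) * 0\<^sub>m (b i) (b i))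
      (0\<^sub>m (b i) (a i) * 1\<^sub>m (a i) + 0\<^sub>m (b i) (b i) * 0\<^sub>m (b i) (a i))
      (0\<^sub>m (b i) (a i) * 0\<^sub>m (a i) (b i) + 0\<^sub>m (b i) (b i) * 0\<^sub>m (b i) (b i))"
      unfolding P_def by (rule mult_four_block_mat) auto
    then show ?thesis unfolding P_def by simp
  qed
  define E where "E i = \<psi> i * P i * \<phi> i" for i
  have Ec: "E i \<in> carrier_mat (d i) (d i)" for i unfolding E_def using \<psi>c Pc \<phi>c by (meson mult_carrier_mat)
  have EE: "E i * E i = E i" for i unfolding E_def by (rule conj_idem[OF \<psi>c Pc \<phi>c inv2 PP])
  have split: "zz_split V E"
    unfolding zz_split_def d_def[symmetric]
  proof (intro conjI allI impI)
    fix i show "E i \<in> carrier_mat (d i) (d i)" using Ec .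
    show "E i * E i = E i" using EE .
  next
    fix i :: int assume i: "even i"
    show "E (i - 1) * zg V i = zg V i * E i"
      unfolding E_def
      by (rule conj_comm[OF \<psi>c Pc \<phi>c gVc[OF i] _ \<psi>c Pc \<phi>c])
         (insert \<phi>g[OF i] \<psi>g[OF i] gUc[OF i] gWc[OF i], auto simp: gS P_def intro: block_comm)
    show "E (i + 1) * zf V i = zf V i * E i"
      unfolding E_def
      by (rule conj_comm[OF \<psi>c Pc \<phi>c fVc[OF i] _ \<psi>c Pc \<phi>c])
         (insert \<phi>g[OF i] \<psi>g[OF i] fUc[OF i] fWc[OF i], auto simp: fS P_def intro: block_comm)
  qed
  have bk: "\<phi> i * E i * \<psi> i = P i" for i
  proof -
    have \<psi>P: "\<psi> i * P i \<in> carrier_mat (d i) (a i + b i)" using \<psi>c[of i] Pc[of i] by simp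
    have "\<phi> i * (\<psi> i * P i) = (\<phi> i * \<psi> i) * P i" using assoc_mult_mat[OF \<phi>c \<psi>c Pc] by simp
    then have 1: "\<phi> i * (\<psi> i * P i) = P i" using inv2[of i] Pc[of i] by simp
    have "\<phi> i * E i = (\<phi> i * (\<psi> i * P i)) * \<phi> i" unfolding E_def using assoc_mult_mat[OF \<phi>c \<psi>P \<phi>c] by simp
    then have "\<phi> i * E i = P i * \<phi> i" using 1 by simp
    then have "\<phi> i * E i * \<psi> i = P i * (\<phi> i * \<psi> i)" using assoc_mult_mat[OF Pc \<phi>c \<psi>c] by simp
    then show ?thesis using inv2[of i] Pc[of i] by simp
  qed
  obtain i where ai: "a i \<noteq> 0" using U0 unfolding zz_zero_def a_def by blast
  obtain j where bj: "b j \<noteq> 0" using W0 unfolding zz_zero_def b_def by blast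
  have nz: "E i \<noteq> 0\<^sub>m (d i) (d i)"
  proof
    assume "E i = 0\<^sub>m (d i) (d i)"
    then have "P i = 0\<^sub>m (a i + b i) (a i + b i)" using bk[of i] \<phi>c[of i] \<psi>c[of i] by simp
    then have "P i $$ (0,0) = 0" using ai by simp
    moreover have "P i $$ (0,0) = 1" using ai unfolding P_def by simp
    ultimately show False by simp
  qed
  have n1: "E j \<noteq> 1\<^sub>m (d j)"
  proof
    assume "E j = 1\<^sub>m (d j)"
    then have "P j = 1\<^sub>m (a j + b j)" using bk[of j] \<phi>c[of j] \<psi>c[of j] inv2[of j] by simp
    then have "P j $$ (a j, a j) = 1" using bj by simp
    moreover have "P j $$ (a j, a j) = 0" using bj unfolding P_def by simp
    ultimately show False by simp
  qed
  show ?thesis using split nz n1 unfolding d_def by blast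
qed

lemma compl_facts:
  fixes E :: "'a::field mat"
  assumes E: "E \<in> carrier_mat n n" and EE: "E * E = E"
  shows "(1\<^sub>m n - E) * (1\<^sub>m n - E) = 1\<^sub>m n - E" "E * (1\<^sub>m n - E) = 0\<^sub>m n n" "(1\<^sub>m n - E) * E = 0\<^sub>m n n"
proof -
  have G: "1\<^sub>m n - E \<in> carrier_mat n n" using E by simp
  show 2: "E * (1\<^sub>m n - E) = 0\<^sub>m n n"
    using mult_minus_distrib_mat[OF E one_carrier_mat E] E EE by simp
  show 3: "(1\<^sub>m n - E) * E = 0\<^sub>m n n"
    using minus_mult_distrib_mat[OF one_carrier_mat E E] E EE by simp
  show "(1\<^sub>m n - E) * (1\<^sub>m n - E) = 1\<^sub>m n - E"
    using minus_mult_distrib_mat[OF one_carrier_mat E G] 2 G left_mult_one_mat[OF G] by simp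
qed

lemma compl_comm:
  fixes E E' g :: "'a::field mat"
  assumes E: "E \<in> carrier_mat n n" and E': "E' \<in> carrier_mat n' n'" and g: "g \<in> carrier_mat n' n"
    and c: "E' * g = g * E"
  shows "(1\<^sub>m n' - E') * g = g * (1\<^sub>m n - E)"
  using minus_mult_distrib_mat[OF one_carrier_mat E' g] mult_minus_distrib_mat[OF g one_carrier_mat E] c g by simp

lemma hom_part:
  fixes C B C' B' E E' g :: "'a::field mat"
  assumes C: "C \<in> carrier_mat r n" and B: "B \<in> carrier_mat n r" and CB: "C * B = 1\<^sub>m r" and BC: "B * C = E"
    and C': "C' \<in> carrier_mat r' n'" and B': "B' \<in> carrier_mat n' r'" and CB': "C' * B' = 1\<^sub>m r'" and BC': "B' * C' = E'"
    and g: "g \<in> carrier_mat n' n" and c: "E' * g = g * E"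
  shows "(C' * g * B) * C = C' * g" "B' * (C' * g * B) = g * B"
proof -
  have C'g: "C' * g \<in> carrier_mat r' n" using C' g by simp
  have Ec: "E \<in> carrier_mat n n" using B C BC by auto
  have E'c: "E' \<in> carrier_mat n' n'" using B' C' BC' by auto
  have "(C' * g * B) * C = (C' * g) * E" using assoc_mult_mat[OF C'g B C] BC by simp
  also have "\<dots> = C' * (g * E)" using assoc_mult_mat[OF C' g Ec] .
  also have "\<dots> = C' * (E' * g)" using c by simp
  also have "\<dots> = (C' * E') * g" using assoc_mult_mat[OF C' E'c g] by simp
  also have "C' * E' = C'" using assoc_mult_mat[OF C' B' C', symmetric] BC' CB' C' by simp
  finally show "(C' * g * B) * C = C' * g" .
  have gB: "g * B \<in> carrier_mat n' r" using g B by simp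
  have "B' * (C' * g * B) = (B' * C') * (g * B)"
    using assoc_mult_mat[OF B' C' gB] assoc_mult_mat[OF C' g B] by simp
  also have "\<dots> = E' * g * B" using BC' assoc_mult_mat[OF E'c g B] by simp
  also have "\<dots> = g * (E * B)" using c assoc_mult_mat[OF g Ec B] by simp
  also have "E * B = B" using BC[symmetric] assoc_mult_mat[OF B C B] CB B by simp
  finally show "B' * (C' * g * B) = g * B" .
qed

lemma cross_zero:
  fixes C1 B1 C2 B2 E G :: "'a::field mat"
  assumes C1: "C1 \<in> carrier_mat r1 n" and B1: "B1 \<in> carrier_mat n r1" and CB1: "C1 * B1 = 1\<^sub>m r1" and BC1: "B1 * C1 = E"
    and C2: "C2 \<in> carrier_mat r2 n" and B2: "B2 \<in> carrier_mat n r2" and CB2: "C2 * B2 = 1\<^sub>m r2" and BC2: "B2 * C2 = G"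
    and EG: "E * G = 0\<^sub>m n n"
  shows "C1 * B2 = 0\<^sub>m r1 r2"
proof -
  have e1: "C1 * E = C1" using BC1[symmetric] assoc_mult_mat[OF C1 B1 C1, symmetric] CB1 C1 by simp
  have e2: "G * B2 = B2" using BC2[symmetric] assoc_mult_mat[OF B2 C2 B2] CB2 B2 by simp
  have Ec: "E \<in> carrier_mat n n" using BC1 B1 C1 by auto
  have Gc: "G \<in> carrier_mat n n" using BC2 B2 C2 by auto
  have "C1 * B2 = (C1 * E) * (G * B2)" using e1 e2 by simp
  also have "\<dots> = C1 * ((E * G) * B2)"
    using assoc_mult_mat[OF C1 Ec, of "G * B2" r2] assoc_mult_mat[OF Ec Gc B2] Gc B2 by simp
  finally show ?thesis using EG C1 B2 by simp
qed

lemma empty_prod: "B \<in> carrier_mat n 0 \<Longrightarrow> C \<in> carrier_mat 0 m \<Longrightarrow> B * C = (0\<^sub>m n m :: 'a :: semiring_0 mat)"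
  by (intro eq_matI) (auto simp: scalar_prod_def)

lemma block_psi_phi:
  fixes C1 B1 C2 B2 :: "'a::field mat"
  assumes C1: "C1 \<in> carrier_mat r1 n" and B1: "B1 \<in> carrier_mat n r1"
    and C2: "C2 \<in> carrier_mat r2 n" and B2: "B2 \<in> carrier_mat n r2" and s: "B1 * C1 + B2 * C2 = 1\<^sub>m n"
  shows "four_block_mat B1 B2 (0\<^sub>m 0 r1) (0\<^sub>m 0 r2) * four_block_mat C1 (0\<^sub>m r1 0) C2 (0\<^sub>m r2 0) = 1\<^sub>m n"
proof -
  have "four_block_mat B1 B2 (0\<^sub>m 0 r1) (0\<^sub>m 0 r2) * four_block_mat C1 (0\<^sub>m r1 0) C2 (0\<^sub>m r2 0)
    = four_block_mat (B1 * C1 + B2 * C2) (B1 * 0\<^sub>m r1 0 + B2 * 0\<^sub>m r2 0)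
       (0\<^sub>m 0 r1 * C1 + 0\<^sub>m 0 r2 * C2) (0\<^sub>m 0 r1 * 0\<^sub>m r1 0 + 0\<^sub>m 0 r2 * 0\<^sub>m r2 0)"
    by (rule mult_four_block_mat) (use C1 B1 C2 B2 in auto)
  also have "\<dots> = B1 * C1 + B2 * C2" by (rule four_block_degen[of _ n n]) (use B1 C1 B2 C2 in auto)
  finally show ?thesis using s by simp
qed

lemma block_phi_psi:
  fixes C1 B1 C2 B2 :: "'a::field mat"
  assumes C1: "C1 \<in> carrier_mat r1 n" and B1: "B1 \<in> carrier_mat n r1"
    and C2: "C2 \<in> carrier_mat r2 n" and B2: "B2 \<in> carrier_mat n r2"
    and CB1: "C1 * B1 = 1\<^sub>m r1" and CB2: "C2 * B2 = 1\<^sub>m r2" and x1: "C1 * B2 = 0\<^sub>m r1 r2" and x2: "C2 * B1 = 0\<^sub>m r2 r1"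
  shows "four_block_mat C1 (0\<^sub>m r1 0) C2 (0\<^sub>m r2 0) * four_block_mat B1 B2 (0\<^sub>m 0 r1) (0\<^sub>m 0 r2) = 1\<^sub>m (r1 + r2)"
proof -
  have "four_block_mat C1 (0\<^sub>m r1 0) C2 (0\<^sub>m r2 0) * four_block_mat B1 B2 (0\<^sub>m 0 r1) (0\<^sub>m 0 r2)
    = four_block_mat (C1 * B1 + 0\<^sub>m r1 0 * 0\<^sub>m 0 r1) (C1 * B2 + 0\<^sub>m r1 0 * 0\<^sub>m 0 r2)
       (C2 * B1 + 0\<^sub>m r2 0 * 0\<^sub>m 0 r1) (C2 * B2 + 0\<^sub>m r2 0 * 0\<^sub>m 0 r2)"
    by (rule mult_four_block_mat) (use C1 B1 C2 B2 in auto)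
  also have "\<dots> = four_block_mat (1\<^sub>m r1) (0\<^sub>m r1 r2) (0\<^sub>m r2 r1) (1\<^sub>m r2)"
    using CB1 CB2 x1 x2 by simp
  finally show ?thesis by simp
qed

lemma block_phi_hom:
  fixes C1 C2 C1' C2' X Y g :: "'a::field mat"
  assumes C1: "C1 \<in> carrier_mat r1 n" and C2: "C2 \<in> carrier_mat r2 n"
    and C1': "C1' \<in> carrier_mat r1' n'" and C2': "C2' \<in> carrier_mat r2' n'" and g: "g \<in> carrier_mat n' n"
    and X: "X \<in> carrier_mat r1' r1" and Y: "Y \<in> carrier_mat r2' r2"
    and hX: "X * C1 = C1' * g" and hY: "Y * C2 = C2' * g"
  shows "four_block_mat C1' (0\<^sub>m r1' 0) C2' (0\<^sub>m r2' 0) * g =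
    four_block_mat X (0\<^sub>m r1' r2) (0\<^sub>m r2' r1) Y * four_block_mat C1 (0\<^sub>m r1 0) C2 (0\<^sub>m r2 0)"
proof -
  have gb: "g = four_block_mat g (0\<^sub>m n' 0) (0\<^sub>m 0 n) (0\<^sub>m 0 0)"
    using four_block_degen[OF g, of "0\<^sub>m 0 0"] by simp
  have "four_block_mat C1' (0\<^sub>m r1' 0) C2' (0\<^sub>m r2' 0) * g =
    four_block_mat C1' (0\<^sub>m r1' 0) C2' (0\<^sub>m r2' 0) * four_block_mat g (0\<^sub>m n' 0) (0\<^sub>m 0 n) (0\<^sub>m 0 0)"
    using gb by simp
  also have "\<dots> = four_block_mat (C1' * g + 0\<^sub>m r1' 0 * 0\<^sub>m 0 n) (C1' * 0\<^sub>m n' 0 + 0\<^sub>m r1' 0 * 0\<^sub>m 0 0)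
      (C2' * g + 0\<^sub>m r2' 0 * 0\<^sub>m 0 n) (C2' * 0\<^sub>m n' 0 + 0\<^sub>m r2' 0 * 0\<^sub>m 0 0)"
    by (rule mult_four_block_mat) (use C1' C2' g in auto)
  also have "\<dots> = four_block_mat (X * C1 + 0\<^sub>m r1' r2 * C2) (X * 0\<^sub>m r1 0 + 0\<^sub>m r1' r2 * 0\<^sub>m r2 0)
      (0\<^sub>m r2' r1 * C1 + Y * C2) (0\<^sub>m r2' r1 * 0\<^sub>m r1 0 + Y * 0\<^sub>m r2 0)"
    using hX hY C1 C2 C1' C2' g X Y by simp
  also have "\<dots> = four_block_mat X (0\<^sub>m r1' r2) (0\<^sub>m r2' r1) Y * four_block_mat C1 (0\<^sub>m r1 0) C2 (0\<^sub>m r2 0)"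
    by (rule mult_four_block_mat[symmetric]) (use C1 C2 X Y in auto)
  finally show ?thesis .
qed

lemma block_psi_hom:
  fixes B1 B2 B1' B2' X Y g :: "'a::field mat"
  assumes B1: "B1 \<in> carrier_mat n r1" and B2: "B2 \<in> carrier_mat n r2"
    and B1': "B1' \<in> carrier_mat n' r1'" and B2': "B2' \<in> carrier_mat n' r2'" and g: "g \<in> carrier_mat n' n"
    and X: "X \<in> carrier_mat r1' r1" and Y: "Y \<in> carrier_mat r2' r2"
    and hX: "B1' * X = g * B1" and hY: "B2' * Y = g * B2"
  shows "four_block_mat B1' B2' (0\<^sub>m 0 r1') (0\<^sub>m 0 r2') * four_block_mat X (0\<^sub>m r1' r2) (0\<^sub>m r2' r1) Y =
    g * four_block_mat B1 B2 (0\<^sub>m 0 r1) (0\<^sub>m 0 r2)"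
proof -
  have gb: "g = four_block_mat g (0\<^sub>m n' 0) (0\<^sub>m 0 n) (0\<^sub>m 0 0)"
    using four_block_degen[OF g, of "0\<^sub>m 0 0"] by simp
  have "four_block_mat B1' B2' (0\<^sub>m 0 r1') (0\<^sub>m 0 r2') * four_block_mat X (0\<^sub>m r1' r2) (0\<^sub>m r2' r1) Y
    = four_block_mat (B1' * X + B2' * 0\<^sub>m r2' r1) (B1' * 0\<^sub>m r1' r2 + B2' * Y)
       (0\<^sub>m 0 r1' * X + 0\<^sub>m 0 r2' * 0\<^sub>m r2' r1) (0\<^sub>m 0 r1' * 0\<^sub>m r1' r2 + 0\<^sub>m 0 r2' * Y)"
    by (rule mult_four_block_mat) (use B1' B2' X Y in auto)
  also have "\<dots> = four_block_mat (g * B1 + 0\<^sub>m n' 0 * 0\<^sub>m 0 r1) (g * B2 + 0\<^sub>m n' 0 * 0\<^sub>m 0 r2)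
       (0\<^sub>m 0 n * B1 + 0\<^sub>m 0 0 * 0\<^sub>m 0 r1) (0\<^sub>m 0 n * B2 + 0\<^sub>m 0 0 * 0\<^sub>m 0 r2)"
    using hX hY B1 B2 B1' B2' g X Y by simp
  also have "\<dots> = four_block_mat g (0\<^sub>m n' 0) (0\<^sub>m 0 n) (0\<^sub>m 0 0) * four_block_mat B1 B2 (0\<^sub>m 0 r1) (0\<^sub>m 0 r2)"
    by (rule mult_four_block_mat[symmetric]) (use B1 B2 g in auto)
  finally show ?thesis using gb by simp
qed

lemma split_to_decomp:
  fixes V :: "('a::field) zz"
  assumes V: "zz_module V" and E: "zz_split V E"
    and i0: "E i0 \<noteq> 0\<^sub>m (zdim V i0) (zdim V i0)" and j0: "E j0 \<noteq> 1\<^sub>m (zdim V j0)"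
  shows "zz_decomposable V"
proof -
  define d where "d = zdim V"
  have Ec: "E i \<in> carrier_mat (d i) (d i)" and EE: "E i * E i = E i" for i
    using E unfolding zz_split_def d_def by auto
  have gVc: "even i \<Longrightarrow> zg V i \<in> carrier_mat (d (i - 1)) (d i)" and fVc: "even i \<Longrightarrow> zf V i \<in> carrier_mat (d (i + 1)) (d i)" for i
    using V unfolding zz_module_def d_def by auto
  have gcom: "even i \<Longrightarrow> E (i - 1) * zg V i = zg V i * E i"
   and fcom: "even i \<Longrightarrow> E (i + 1) * zf V i = zf V i * E i" for i
    using E unfolding zz_split_def by auto
  define G where "G i = 1\<^sub>m (d i) - E i" for i
  have Gc: "G i \<in> carrier_mat (d i) (d i)" for i unfolding G_def using Ec[of i] by simp
  have GG: "G i * G i = G i" and EG: "E i * G i = 0\<^sub>m (d i) (d i)" and GE: "G i * E i = 0\<^sub>m (d i) (d i)" for i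
    unfolding G_def using compl_facts[OF Ec EE] by auto
  have ggcom: "even i \<Longrightarrow> G (i - 1) * zg V i = zg V i * G i"
   and gfcom: "even i \<Longrightarrow> G (i + 1) * zf V i = zf V i * G i" for i
    unfolding G_def using compl_comm[OF Ec Ec gVc gcom] compl_comm[OF Ec Ec fVc fcom] by auto
  have "\<forall>i. \<exists>r B C. B \<in> carrier_mat (d i) r \<and> C \<in> carrier_mat r (d i) \<and> C * B = 1\<^sub>m r \<and> B * C = E i"
    using idem_factor[OF Ec EE] by blast
  then obtain r1 B1 C1 where B1: "\<And>i. B1 i \<in> carrier_mat (d i) (r1 i)" and C1: "\<And>i. C1 i \<in> carrier_mat (r1 i) (d i)"
    and CB1: "\<And>i. C1 i * B1 i = 1\<^sub>m (r1 i)" and BC1: "\<And>i. B1 i * C1 i = E i"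
    by metis
  have "\<forall>i. \<exists>r B C. B \<in> carrier_mat (d i) r \<and> C \<in> carrier_mat r (d i) \<and> C * B = 1\<^sub>m r \<and> B * C = G i"
    using idem_factor[OF Gc GG] by blast
  then obtain r2 B2 C2 where B2: "\<And>i. B2 i \<in> carrier_mat (d i) (r2 i)" and C2: "\<And>i. C2 i \<in> carrier_mat (r2 i) (d i)"
    and CB2: "\<And>i. C2 i * B2 i = 1\<^sub>m (r2 i)" and BC2: "\<And>i. B2 i * C2 i = G i"
    by metis
  define U :: "'a zz" where "U = \<lparr>zdim = r1, zg = (\<lambda>i. C1 (i - 1) * zg V i * B1 i), zf = (\<lambda>i. C1 (i + 1) * zf V i * B1 i)\<rparr>"
  define W :: "'a zz" where "W = \<lparr>zdim = r2, zg = (\<lambda>i. C2 (i - 1) * zg V i * B2 i), zf = (\<lambda>i. C2 (i + 1) * zf V i * B2 i)\<rparr>"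
  define \<phi> where "\<phi> i = four_block_mat (C1 i) (0\<^sub>m (r1 i) 0) (C2 i) (0\<^sub>m (r2 i) 0)" for i
  define \<psi> where "\<psi> i = four_block_mat (B1 i) (B2 i) (0\<^sub>m 0 (r1 i)) (0\<^sub>m 0 (r2 i))" for i
  have Um: "zz_module U" unfolding zz_module_def U_def
    using mult_carrier_mat[OF mult_carrier_mat[OF C1 gVc] B1] mult_carrier_mat[OF mult_carrier_mat[OF C1 fVc] B1] by auto
  have Wm: "zz_module W" unfolding zz_module_def W_def
    using mult_carrier_mat[OF mult_carrier_mat[OF C2 gVc] B2] mult_carrier_mat[OF mult_carrier_mat[OF C2 fVc] B2] by auto
  have r1: "r1 i0 \<noteq> 0"
  proof
    assume "r1 i0 = 0"
    then have "E i0 = 0\<^sub>m (d i0) (d i0)" using BC1[of i0] empty_prod[of "B1 i0" "d i0" "C1 i0" "d i0"] B1[of i0] C1[of i0] by simp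
    then show False using i0 unfolding d_def by simp
  qed
  have r2: "r2 j0 \<noteq> 0"
  proof
    assume "r2 j0 = 0"
    then have "G j0 = 0\<^sub>m (d j0) (d j0)" using BC2[of j0] empty_prod[of "B2 j0" "d j0" "C2 j0" "d j0"] B2[of j0] C2[of j0] by simp
    then have "E j0 = 1\<^sub>m (d j0)" unfolding G_def using Ec[of j0]
      by (intro eq_matI) (auto simp: mat_eq_iff)
    then show False using j0 unfolding d_def by simp
  qed
  have U0: "\<not> zz_zero U" unfolding zz_zero_def U_def using r1 by auto
  have W0: "\<not> zz_zero W" unfolding zz_zero_def W_def using r2 by auto
  define S where "S = zz_sum U W"
  have dS: "zdim S i = r1 i + r2 i" for i unfolding S_def zz_sum_def U_def W_def by simp
  have gS: "zg S i = four_block_mat (C1 (i - 1) * zg V i * B1 i) (0\<^sub>m (r1 (i - 1)) (r2 i)) (0\<^sub>m (r2 (i - 1)) (r1 i)) (C2 (i - 1) * zg V i * B2 i)"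
   and fS: "zf S i = four_block_mat (C1 (i + 1) * zf V i * B1 i) (0\<^sub>m (r1 (i + 1)) (r2 i)) (0\<^sub>m (r2 (i + 1)) (r1 i)) (C2 (i + 1) * zf V i * B2 i)" for i
    unfolding S_def zz_sum_def U_def W_def by simp_all
  have \<phi>c: "\<phi> i \<in> carrier_mat (r1 i + r2 i) (d i)" for i
    unfolding \<phi>_def using C1[of i] C2[of i] four_block_carrier_mat[OF C1 zero_carrier_mat[of "r2 i" 0]] by simp
  have \<psi>c: "\<psi> i \<in> carrier_mat (d i) (r1 i + r2 i)" for i
    unfolding \<psi>_def using four_block_carrier_mat[OF B1 zero_carrier_mat[of 0 "r2 i"]] by simp
  have x1: "C1 i * B2 i = 0\<^sub>m (r1 i) (r2 i)" for i by (rule cross_zero[OF C1 B1 CB1 BC1 C2 B2 CB2 BC2 EG])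
  have x2: "C2 i * B1 i = 0\<^sub>m (r2 i) (r1 i)" for i by (rule cross_zero[OF C2 B2 CB2 BC2 C1 B1 CB1 BC1 GE])
  have sumEG: "B1 i * C1 i + B2 i * C2 i = 1\<^sub>m (d i)" for i
    unfolding BC1 BC2 G_def using Ec[of i] by (intro eq_matI) auto
  have inv1: "\<psi> i * \<phi> i = 1\<^sub>m (d i)" for i
    unfolding \<psi>_def \<phi>_def by (rule block_psi_phi[OF C1 B1 C2 B2 sumEG])
  have inv2: "\<phi> i * \<psi> i = 1\<^sub>m (r1 i + r2 i)" for i
    unfolding \<psi>_def \<phi>_def by (rule block_phi_psi[OF C1 B1 C2 B2 CB1 CB2 x1 x2])
  have hp1: "(C1 i' * h * B1 i) * C1 i = C1 i' * h" "B1 i' * (C1 i' * h * B1 i) = h * B1 i"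
   and hp2: "(C2 i' * h * B2 i) * C2 i = C2 i' * h" "B2 i' * (C2 i' * h * B2 i) = h * B2 i"
    if h: "h \<in> carrier_mat (d i') (d i)" and hc: "E i' * h = h * E i" and hg: "G i' * h = h * G i" for i i' h
    using hom_part[OF C1 B1 CB1 BC1 C1 B1 CB1 BC1 h hc] hom_part[OF C2 B2 CB2 BC2 C2 B2 CB2 BC2 h hg] by auto
  have Xg1: "C1 (i - 1) * zg V i * B1 i \<in> carrier_mat (r1 (i - 1)) (r1 i)"
   and Xg2: "C2 (i - 1) * zg V i * B2 i \<in> carrier_mat (r2 (i - 1)) (r2 i)"
   and Xf1: "C1 (i + 1) * zf V i * B1 i \<in> carrier_mat (r1 (i + 1)) (r1 i)"
   and Xf2: "C2 (i + 1) * zf V i * B2 i \<in> carrier_mat (r2 (i + 1)) (r2 i)" if "even i" for i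
    using mult_carrier_mat[OF mult_carrier_mat[OF C1 gVc[OF that]] B1] mult_carrier_mat[OF mult_carrier_mat[OF C2 gVc[OF that]] B2]
      mult_carrier_mat[OF mult_carrier_mat[OF C1 fVc[OF that]] B1] mult_carrier_mat[OF mult_carrier_mat[OF C2 fVc[OF that]] B2]
    by auto
  have h1: "zz_hom V S \<phi>"
    unfolding zz_hom_def
  proof (intro conjI allI impI)
    fix i show "\<phi> i \<in> carrier_mat (zdim S i) (zdim V i)" using \<phi>c[of i] dS[of i] unfolding d_def by simp
  next
    fix i :: int assume i: "even i"
    show "\<phi> (i - 1) * zg V i = zg S i * \<phi> i"
      unfolding gS \<phi>_def
      by (rule block_phi_hom[OF C1 C2 C1 C2 gVc[OF i]])
         (use Xg1[OF i] Xg2[OF i] hp1[OF gVc[OF i] gcom[OF i] ggcom[OF i]] hp2[OF gVc[OF i] gcom[OF i] ggcom[OF i]] in auto)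
    show "\<phi> (i + 1) * zf V i = zf S i * \<phi> i"
      unfolding fS \<phi>_def
      by (rule block_phi_hom[OF C1 C2 C1 C2 fVc[OF i]])
         (use Xf1[OF i] Xf2[OF i] hp1[OF fVc[OF i] fcom[OF i] gfcom[OF i]] hp2[OF fVc[OF i] fcom[OF i] gfcom[OF i]] in auto)
  qed
  have h2: "zz_hom S V \<psi>"
    unfolding zz_hom_def
  proof (intro conjI allI impI)
    fix i show "\<psi> i \<in> carrier_mat (zdim V i) (zdim S i)" using \<psi>c[of i] dS[of i] unfolding d_def by simp
  next
    fix i :: int assume i: "even i"
    show "\<psi> (i - 1) * zg S i = zg V i * \<psi> i"
      unfolding gS \<psi>_def
      by (rule block_psi_hom[OF B1 B2 B1 B2 gVc[OF i]])
         (use Xg1[OF i] Xg2[OF i] hp1[OF gVc[OF i] gcom[OF i] ggcom[OF i]] hp2[OF gVc[OF i] gcom[OF i] ggcom[OF i]] in auto)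
    show "\<psi> (i + 1) * zf S i = zf V i * \<psi> i"
      unfolding fS \<psi>_def
      by (rule block_psi_hom[OF B1 B2 B1 B2 fVc[OF i]])
         (use Xf1[OF i] Xf2[OF i] hp1[OF fVc[OF i] fcom[OF i] gfcom[OF i]] hp2[OF fVc[OF i] fcom[OF i] gfcom[OF i]] in auto)
  qed
  have "zz_iso V S"
    unfolding zz_iso_def using h1 h2 inv1 inv2 dS unfolding d_def by metis
  then show ?thesis unfolding zz_decomposable_def S_def using Um Wm U0 W0 by blast
qed

theorem lemma1:
  fixes V :: "('a::field) zz"
  assumes "zz_module V" and "\<not> zz_zero V"
  shows "zz_indecomposable V \<longleftrightarrow> (\<forall>k::int. k \<ge> 0 \<longrightarrow> zz_interval_indecomposable V (- k) k)"
proof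
  assume ind: "zz_indecomposable V"
  show "\<forall>k::int. k \<ge> 0 \<longrightarrow> zz_interval_indecomposable V (- k) k"
  proof (intro allI impI)
    fix k :: int assume "k \<ge> 0"
    show "zz_interval_indecomposable V (- k) k"
      unfolding zz_interval_indecomposable_def
    proof (intro conjI allI impI)
      show "\<not> zz_zero V" using assms(2) .
    next
      fix S1 S2 assume D: "zz_internal_decomp V S1 S2"
      show "(\<forall>i\<in>{- k..k}. S1 i = {0\<^sub>v (zdim V i)}) \<or> (\<forall>i\<in>{- k..k}. S2 i = {0\<^sub>v (zdim V i)})"
      proof (rule ccontr)
        assume "\<not> ((\<forall>i\<in>{- k..k}. S1 i = {0\<^sub>v (zdim V i)}) \<or> (\<forall>i\<in>{- k..k}. S2 i = {0\<^sub>v (zdim V i)}))"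
        then obtain i j where i: "S1 i \<noteq> {0\<^sub>v (zdim V i)}" and j: "S2 j \<noteq> {0\<^sub>v (zdim V j)}" by blast
        obtain E where E: "zz_split V E" and n1: "\<And>i. S1 i \<noteq> {0\<^sub>v (zdim V i)} \<Longrightarrow> E i \<noteq> 0\<^sub>m (zdim V i) (zdim V i)"
          and n2: "\<And>i. S2 i \<noteq> {0\<^sub>v (zdim V i)} \<Longrightarrow> E i \<noteq> 1\<^sub>m (zdim V i)"
          using internal_to_split[OF assms(1) D] by blast
        have "zz_decomposable V" by (rule split_to_decomp[OF assms(1) E n1[OF i] n2[OF j]])
        then show False using ind unfolding zz_indecomposable_def by blast
      qed
    qed
  qed
next
  assume H: "\<forall>k::int. k \<ge> 0 \<longrightarrow> zz_interval_indecomposable V (- k) k"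
  show "zz_indecomposable V"
    unfolding zz_indecomposable_def
  proof
    assume "zz_decomposable V"
    then obtain E i j where E: "zz_split V E" and i: "E i \<noteq> 0\<^sub>m (zdim V i) (zdim V i)" and j: "E j \<noteq> 1\<^sub>m (zdim V j)"
      using decomp_to_split[OF assms(1)] by blast
    obtain S1 S2 where D: "zz_internal_decomp V S1 S2"
      and n1: "\<And>i. E i \<noteq> 0\<^sub>m (zdim V i) (zdim V i) \<Longrightarrow> S1 i \<noteq> {0\<^sub>v (zdim V i)}"
      and n2: "\<And>i. E i \<noteq> 1\<^sub>m (zdim V i) \<Longrightarrow> S2 i \<noteq> {0\<^sub>v (zdim V i)}"
      using split_to_internal[OF assms(1) E] by blast
    define k where "k = max \<bar>i\<bar> \<bar>j\<bar>"
    have k: "k \<ge> 0" "i \<in> {-k..k}" "j \<in> {-k..k}" unfolding k_def by auto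
    have "zz_interval_indecomposable V (- k) k" using H k(1) by blast
    then have "(\<forall>x\<in>{- k..k}. S1 x = {0\<^sub>v (zdim V x)}) \<or> (\<forall>x\<in>{- k..k}. S2 x = {0\<^sub>v (zdim V x)})"
      using D unfolding zz_interval_indecomposable_def by blast
    then show False using n1[OF i] n2[OF j] k by blast
  qed
qed
end
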